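(* Let $\Gamma$ be a single-player extensive-form game without absentmindedness, and let $\mathscr C$ be the class of games sharing the same game tree and infoset partition as $\Gamma$ (with arbitrary nonnegative utilities). Then $\mathrm{VoR}^{\mathrm{opt}}(\mathscr C)\le\max_{h\in\mathcal H_c}\beta(h)$, where by convention this maximum is $1$ if $\mathcal H_c=\emptyset$.
   Context: A single-player extensive-form game consists of a finite rooted tree (nodes $\mathcal H$, leaves $\mathcal Z$, actions $A_h$); nonterminal nodes belong to Player 1 or to chance; $\mathcal H_c$ is the set of chance nodes, each with a fixed distribution on its actions; Player 1 has utility $u_1:\mathcal Z\to\mathbb R_{\ge0}$ and a partition of its nodes into infosets with common action sets. The game tree consists of nodes, actions and chance distributions. For a node $h$, $\mathrm{obs}(h)$ lists (player, infoset, action) along the root-to-$h$ path (excluding $h$); $\mathrm{obs}_1(h)$ restricts to Player 1. Absentmindedness: some infoset appears more than once in $\mathrm{obs}(h)$ for some $h$. $\mathrm{pr}_1(\Gamma)$ has the same tree and utilities with each infoset partitioned into classes of $h\sim h'\iff\mathrm{obs}_1(h)=\mathrm{obs}_1(h')$. $u_1(\mathrm{opt}(\cdot))$ is the maximum expected utility over behavioral strategies; $\mathrm{VoR}^{\mathrm{opt}}(\Gamma)=u_1(\mathrm{opt}(\mathrm{pr}_1(\Gamma)))/u_1(\mathrm{opt}(\Gamma))$; $\mathrm{VoR}^{\mathrm{opt}}(\mathscr C)=\sup_{\Gamma'\in\mathscr C}\mathrm{VoR}^{\mathrm{opt}}(\Gamma')$. Branching factor: for $h\in\mathcal H_c$ and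 $a\in A_h$, $H_{ha}$ is the set of chance nodes in the subtree rooted at the child of $h$ via $a$; $b_h(a)=1$ if $H_{ha}=\emptyset$, else $\max_{h'\in H_{ha}}\beta(h')$; $\beta(h)=\sum_{a\in A_h}b_h(a)$. *)

theory Defs
  imports Complex_Main
begin

text \<open>Single-player extensive-form games. A node is identified with the list of
actions leading to it from the root (the root is the empty list).\<close>

record ('a, 'i) game =
  nodes  :: "'a list set"
  chance :: "'a list set"
  cprob  :: "'a list \<Rightarrow> 'a \<Rightarrow> real"
  info   :: "'a list \<Rightarrow> 'i"

definition actions :: "('a, 'i) game \<Rightarrow> 'a list \<Rightarrow> 'a set" where
  "actions G h = {a. h @ [a] \<in> nodes G}"

definition leaves :: "('a, 'i) game \<Rightarrow> 'a list set" where
  "leaves G = {h \<in> nodes G. actions G h = {}}"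

definition p1_nodes :: "('a, 'i) game \<Rightarrow> 'a list set" where
  "p1_nodes G = {h \<in> nodes G. actions G h \<noteq> {} \<and> h \<notin> chance G}"

definition wf_game :: "('a, 'i) game \<Rightarrow> bool" where
  "wf_game G \<longleftrightarrow>
     finite (nodes G) \<and> [] \<in> nodes G \<and>
     (\<forall>h a. h @ [a] \<in> nodes G \<longrightarrow> h \<in> nodes G) \<and>
     chance G \<subseteq> nodes G \<and> (\<forall>h \<in> chance G. actions G h \<noteq> {}) \<and>
     (\<forall>h \<in> chance G. (\<forall>a \<in> actions G h. cprob G h a \<ge> 0) \<and>
                     (\<Sum>a \<in> actions G h. cprob G h a) = 1) \<and>
     (\<forall>h \<in> p1_nodes G. \<forall>h' \<in> p1_nodes G. info G h = info G h' \<longrightarrow> actions G h = actions G h')"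

definition no_absentmindedness :: "('a, 'i) game \<Rightarrow> bool" where
  "no_absentmindedness G \<longleftrightarrow>
     (\<forall>h \<in> nodes G. \<forall>i j. i < j \<and> j < length h \<and>
        take i h \<in> p1_nodes G \<and> take j h \<in> p1_nodes G \<longrightarrow>
        info G (take i h) \<noteq> info G (take j h))"

definition obs1 :: "('a, 'i) game \<Rightarrow> 'a list \<Rightarrow> ('i \<times> 'a) list" where
  "obs1 G h = [(info G (take i h), h ! i). i \<leftarrow> [0..<length h], take i h \<notin> chance G]"

text \<open>Behavioral strategies, relative to an infoset labelling \<open>L\<close> of the Player-1 nodes
(two Player-1 nodes are in the same infoset iff they have the same label).\<close>
definition behavioral :: "('a, 'i) game \<Rightarrow> ('a list \<Rightarrow> 'l) \<Rightarrow> ('l \<Rightarrow> 'a \<Rightarrow> real) \<Rightarrow> bool" where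
  "behavioral G L \<pi> \<longleftrightarrow>
     (\<forall>h \<in> p1_nodes G. (\<forall>a \<in> actions G h. \<pi> (L h) a \<ge> 0) \<and>
                      (\<Sum>a \<in> actions G h. \<pi> (L h) a) = 1)"

definition reach :: "('a, 'i) game \<Rightarrow> ('a list \<Rightarrow> 'l) \<Rightarrow> ('l \<Rightarrow> 'a \<Rightarrow> real) \<Rightarrow> 'a list \<Rightarrow> real" where
  "reach G L \<pi> z = (\<Prod>i<length z. if take i z \<in> chance G then cprob G (take i z) (z ! i)
                                   else \<pi> (L (take i z)) (z ! i))"

definition exp_util :: "('a, 'i) game \<Rightarrow> ('a list \<Rightarrow> 'l) \<Rightarrow> ('l \<Rightarrow> 'a \<Rightarrow> real) \<Rightarrow> ('a list \<Rightarrow> real) \<Rightarrow> real" where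
  "exp_util G L \<pi> u = (\<Sum>z \<in> leaves G. reach G L \<pi> z * u z)"

definition opt_val :: "('a, 'i) game \<Rightarrow> ('a list \<Rightarrow> 'l) \<Rightarrow> ('a list \<Rightarrow> real) \<Rightarrow> real" where
  "opt_val G L u = (SUP \<pi> \<in> {\<pi>. behavioral G L \<pi>}. exp_util G L \<pi> u)"

text \<open>\<open>pr_1(\<Gamma>)\<close>: same tree, infosets refined by \<open>obs_1\<close>.\<close>
definition pr1_labels :: "('a, 'i) game \<Rightarrow> 'a list \<Rightarrow> 'i \<times> ('i \<times> 'a) list" where
  "pr1_labels G h = (info G h, obs1 G h)"

definition VoR_opt :: "('a, 'i) game \<Rightarrow> ('a list \<Rightarrow> real) \<Rightarrow> real" where
  "VoR_opt G u = opt_val G (pr1_labels G) u / opt_val G (info G) u"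

definition VoR_opt_class :: "('a, 'i) game \<Rightarrow> real" where
  "VoR_opt_class G = (SUP u \<in> {u. \<forall>z \<in> leaves G. u z \<ge> 0}. VoR_opt G u)"

definition subtree_chance :: "('a, 'i) game \<Rightarrow> 'a list \<Rightarrow> 'a list set" where
  "subtree_chance G g = {h' \<in> chance G. \<exists>w. h' = g @ w}"

fun beta_fuel :: "nat \<Rightarrow> ('a, 'i) game \<Rightarrow> 'a list \<Rightarrow> nat" where
  "beta_fuel 0 G h = 1"
| "beta_fuel (Suc n) G h =
     (\<Sum>a \<in> actions G h. if subtree_chance G (h @ [a]) = {} then 1
                          else Max (beta_fuel n G ` subtree_chance G (h @ [a])))"

definition beta :: "('a, 'i) game \<Rightarrow> 'a list \<Rightarrow> nat" where
  "beta G h = beta_fuel (card (nodes G)) G h"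

definition beta_max :: "('a, 'i) game \<Rightarrow> nat" where
  "beta_max G = (if chance G = {} then 1 else Max (beta G ` chance G))"

end

theory Submission
  imports Defs
begin

lemma wf_finite: "wf_game G \<Longrightarrow> finite (nodes G)"
  by (simp add: wf_game_def)

lemma wf_prefix: "wf_game G \<Longrightarrow> h @ w \<in> nodes G \<Longrightarrow> h \<in> nodes G"
proof (induction w rule: rev_induct)
  case Nil then show ?case by simp
next
  case (snoc x xs)
  then have "(h @ xs) @ [x] \<in> nodes G" by simp
  then have "h @ xs \<in> nodes G" using snoc.prems(1) unfolding wf_game_def by blast
  then show ?case using snoc by blast
qed

lemma take_node: "wf_game G \<Longrightarrow> z \<in> nodes G \<Longrightarrow> take i z \<in> nodes G"
  by (metis append_take_drop_id wf_prefix)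

lemma finite_actions: "wf_game G \<Longrightarrow> finite (actions G h)"
proof -
  assume "wf_game G"
  then have "finite ((\<lambda>a. h @ [a]) -` nodes G)"
    by (intro finite_vimageI) (auto simp: wf_game_def inj_def)
  moreover have "actions G h = (\<lambda>a. h @ [a]) -` nodes G" by (auto simp: actions_def)
  ultimately show ?thesis by simp
qed

lemma path_action: "wf_game G \<Longrightarrow> z \<in> nodes G \<Longrightarrow> i < length z \<Longrightarrow> z ! i \<in> actions G (take i z)"
  by (metis actions_def mem_Collect_eq take_Suc_conv_app_nth take_node)

lemma path_p1: "wf_game G \<Longrightarrow> z \<in> nodes G \<Longrightarrow> i < length z \<Longrightarrow> take i z \<notin> chance G \<Longrightarrow> take i z \<in> p1_nodes G"
  unfolding p1_nodes_def using path_action take_node by fastforce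

lemma leaf_ext: "wf_game G \<Longrightarrow> x \<in> leaves G \<Longrightarrow> x @ w \<in> nodes G \<Longrightarrow> w = []"
proof (cases w)
  case (Cons b w')
  assume wf: "wf_game G" and x: "x \<in> leaves G" and n: "x @ w \<in> nodes G"
  have "(x @ [b]) @ w' \<in> nodes G" using n Cons by simp
  then have "x @ [b] \<in> nodes G" using wf wf_prefix by blast
  then have "b \<in> actions G x" by (simp add: actions_def)
  then show ?thesis using x by (simp add: leaves_def)
qed simp

lemma cprob_bounds:
  assumes wf: "wf_game G" and h: "h \<in> chance G" and a: "a \<in> actions G h"
  shows "0 \<le> cprob G h a \<and> cprob G h a \<le> 1"
proof -
  have nn: "\<forall>b \<in> actions G h. cprob G h b \<ge> 0" and s: "(\<Sum>b \<in> actions G h. cprob G h b) = 1"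
    using wf h unfolding wf_game_def by auto
  have "cprob G h a \<le> (\<Sum>b \<in> actions G h. cprob G h b)"
    by (rule member_le_sum) (use a nn finite_actions[OF wf] in auto)
  then show ?thesis using s nn a by auto
qed

lemma behav_bounds:
  assumes wf: "wf_game G" and b: "behavioral G L \<pi>" and h: "h \<in> p1_nodes G" and a: "a \<in> actions G h"
  shows "0 \<le> \<pi> (L h) a \<and> \<pi> (L h) a \<le> 1"
proof -
  have nn: "\<forall>b \<in> actions G h. \<pi> (L h) b \<ge> 0" and s: "(\<Sum>b \<in> actions G h. \<pi> (L h) b) = 1"
    using b h unfolding behavioral_def by auto
  have "\<pi> (L h) a \<le> (\<Sum>b \<in> actions G h. \<pi> (L h) b)"
    by (rule member_le_sum) (use a nn finite_actions[OF wf] in auto)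
  then show ?thesis using s nn a by auto
qed

lemma reach_bounds:
  assumes wf: "wf_game G" and b: "behavioral G L \<pi>" and z: "z \<in> nodes G"
  shows "0 \<le> reach G L \<pi> z \<and> reach G L \<pi> z \<le> 1"
proof -
  have f: "0 \<le> (if take i z \<in> chance G then cprob G (take i z) (z ! i) else \<pi> (L (take i z)) (z ! i))
     \<and> (if take i z \<in> chance G then cprob G (take i z) (z ! i) else \<pi> (L (take i z)) (z ! i)) \<le> 1"
    if "i < length z" for i
    using cprob_bounds[OF wf _ path_action[OF wf z that]] behav_bounds[OF wf b path_p1[OF wf z that] path_action[OF wf z that]]
    by auto
  show ?thesis unfolding reach_def
    using f by (auto intro!: prod_nonneg prod_le_1)
qed

lemma EU_bounds:
  assumes wf: "wf_game G" and b: "behavioral G L \<pi>" and u: "\<forall>z \<in> leaves G. u z \<ge> 0"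
  shows "0 \<le> exp_util G L \<pi> u \<and> exp_util G L \<pi> u \<le> (\<Sum>z \<in> leaves G. u z)"
proof -
  have lv: "z \<in> leaves G \<Longrightarrow> z \<in> nodes G" for z by (simp add: leaves_def)
  have "exp_util G L \<pi> u \<le> (\<Sum>z \<in> leaves G. u z)" unfolding exp_util_def
    apply (rule sum_mono)
    using reach_bounds[OF wf b lv] u by (simp add: mult_left_le_one_le)
  moreover have "0 \<le> exp_util G L \<pi> u" unfolding exp_util_def
    using reach_bounds[OF wf b lv] u by (auto intro!: sum_nonneg)
  ultimately show ?thesis by simp
qed

lemma opt_upper:
  assumes wf: "wf_game G" and b: "behavioral G L \<pi>" and u: "\<forall>z \<in> leaves G. u z \<ge> 0"
  shows "exp_util G L \<pi> u \<le> opt_val G L u"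
  unfolding opt_val_def
  by (rule cSUP_upper) (use b EU_bounds[OF wf _ u] in \<open>auto intro!: bdd_aboveI2\<close>)

lemma opt_least:
  assumes "behavioral G L \<pi>0" and "\<And>\<pi>. behavioral G L \<pi> \<Longrightarrow> exp_util G L \<pi> u \<le> X"
  shows "opt_val G L u \<le> X"
  unfolding opt_val_def using assms by (intro cSUP_least) auto


definition pure :: "('l \<Rightarrow> 'a) \<Rightarrow> 'l \<Rightarrow> 'a \<Rightarrow> real" where
  "pure s l b = (if b = s l then 1 else 0)"

definition cons_from :: "('a, 'i) game \<Rightarrow> ('a list \<Rightarrow> 'l) \<Rightarrow> ('l \<Rightarrow> 'a) \<Rightarrow> 'a list \<Rightarrow> nat \<Rightarrow> bool" where
  "cons_from G L t z p \<longleftrightarrow> (\<forall>j. p \<le> j \<and> j < length z \<and> take j z \<notin> chance G \<longrightarrow> t (L (take j z)) = z ! j)"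

definition cp :: "('a, 'i) game \<Rightarrow> 'a list \<Rightarrow> real" where
  "cp G z = (\<Prod>i<length z. if take i z \<in> chance G then cprob G (take i z) (z ! i) else 1)"

lemma reach_pure: "reach G L (pure t) z = (if cons_from G L t z 0 then cp G z else 0)"
proof (cases "cons_from G L t z 0")
  case True
  then show ?thesis unfolding reach_def cp_def
    by (auto intro!: prod.cong simp: cons_from_def pure_def)
next
  case False
  then obtain j where j: "j < length z" "take j z \<notin> chance G" "t (L (take j z)) \<noteq> z ! j"
    unfolding cons_from_def by auto
  have "reach G L (pure t) z = 0" unfolding reach_def
    by (rule prod_zero) (use j in \<open>auto simp: pure_def intro!: bexI[of _ j]\<close>)
  then show ?thesis using False by simp
qed

lemma cp_nonneg: "wf_game G \<Longrightarrow> z \<in> nodes G \<Longrightarrow> 0 \<le> cp G z"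
  unfolding cp_def
proof (rule prod_nonneg)
  fix i assume wf: "wf_game G" and z: "z \<in> nodes G" and i: "i \<in> {..<length z}"
  show "0 \<le> (if take i z \<in> chance G then cprob G (take i z) (z ! i) else 1)"
    using cprob_bounds[OF wf _ path_action[OF wf z]] i by auto
qed

definition AC :: "('a, 'i) game \<Rightarrow> ('a list \<Rightarrow> 'l) \<Rightarrow> bool" where
  "AC G L \<longleftrightarrow> (\<forall>h\<in>p1_nodes G. \<forall>h'\<in>p1_nodes G. L h = L h' \<longrightarrow> actions G h = actions G h')"

definition NA :: "('a, 'i) game \<Rightarrow> ('a list \<Rightarrow> 'l) \<Rightarrow> bool" where
  "NA G L \<longleftrightarrow> (\<forall>z\<in>nodes G. \<forall>i j. i < j \<and> j < length z \<and> take i z \<in> p1_nodes G \<and> take j z \<in> p1_nodes G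
      \<longrightarrow> L (take i z) \<noteq> L (take j z))"

lemma valid_behav:
  assumes "wf_game G" "\<forall>h\<in>p1_nodes G. s (L h) \<in> actions G h"
  shows "behavioral G L (pure s)"
  unfolding behavioral_def
proof (rule ballI, rule conjI)
  fix h assume h: "h \<in> p1_nodes G"
  show "\<forall>a\<in>actions G h. 0 \<le> pure s (L h) a" by (simp add: pure_def)
  have "(\<Sum>a\<in>actions G h. pure s (L h) a) = (\<Sum>a\<in>actions G h. if a = s (L h) then 1 else 0)"
    by (simp add: pure_def)
  also have "\<dots> = 1" using assms h finite_actions[OF assms(1)] by simp
  finally show "(\<Sum>a\<in>actions G h. pure s (L h) a) = 1" .
qed

definition fixv :: "('a, 'i) game \<Rightarrow> ('a list \<Rightarrow> 'l) \<Rightarrow> ('l \<Rightarrow> 'a) \<Rightarrow> 'l \<Rightarrow> 'a" where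
  "fixv G L t l = (if (\<forall>h\<in>p1_nodes G. L h = l \<longrightarrow> t l \<in> actions G h) then t l
      else (SOME a. \<forall>h\<in>p1_nodes G. L h = l \<longrightarrow> a \<in> actions G h))"

lemma fixv_valid:
  assumes ac: "AC G L" and h: "h \<in> p1_nodes G"
  shows "fixv G L t (L h) \<in> actions G h"
proof (cases "\<forall>h'\<in>p1_nodes G. L h' = L h \<longrightarrow> t (L h) \<in> actions G h'")
  case True then show ?thesis using h by (simp add: fixv_def)
next
  case False
  obtain a where a: "a \<in> actions G h" using h by (auto simp: p1_nodes_def)
  have "\<exists>a. \<forall>h'\<in>p1_nodes G. L h' = L h \<longrightarrow> a \<in> actions G h'"
    using a ac h unfolding AC_def by metis
  then have "\<forall>h'\<in>p1_nodes G. L h' = L h \<longrightarrow> (SOME a. \<forall>h'\<in>p1_nodes G. L h' = L h \<longrightarrow> a \<in> actions G h') \<in> actions G h'"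
    by (rule someI_ex)
  then show ?thesis using False h by (simp add: fixv_def)
qed

lemma fixv_cons:
  assumes wf: "wf_game G" and ac: "AC G L" and z: "z \<in> nodes G" and c: "cons_from G L t z p"
  shows "cons_from G L (fixv G L t) z p"
  unfolding cons_from_def
proof (intro allI impI)
  fix j assume j: "p \<le> j \<and> j < length z \<and> take j z \<notin> chance G"
  have tj: "t (L (take j z)) = z ! j" using c j by (simp add: cons_from_def)
  have p1: "take j z \<in> p1_nodes G" using path_p1[OF wf z] j by blast
  have "z ! j \<in> actions G (take j z)" using path_action[OF wf z] j by blast
  then have "\<forall>h\<in>p1_nodes G. L h = L (take j z) \<longrightarrow> t (L (take j z)) \<in> actions G h"
    using ac p1 tj unfolding AC_def by metis
  then show "fixv G L t (L (take j z)) = z ! j" using tj by (simp add: fixv_def)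
qed

lemma reach_upd_lin:
  assumes wf: "wf_game G" and na: "NA G L" and ac: "AC G L" and z: "z \<in> nodes G"
    and h0: "h0 \<in> p1_nodes G" "L h0 = l" and d: "(\<Sum>a\<in>actions G h0. d a) = 1"
  shows "reach G L (\<pi>(l := d)) z = (\<Sum>a\<in>actions G h0. d a * reach G L (\<pi>(l := (\<lambda>b. if b = a then 1 else 0))) z)"
proof (cases "\<exists>i<length z. take i z \<notin> chance G \<and> L (take i z) = l")
  case False
  then have eq: "reach G L (\<pi>(l := e)) z = reach G L \<pi> z" for e
    unfolding reach_def by (intro prod.cong) auto
  have "(\<Sum>a\<in>actions G h0. d a * reach G L \<pi> z) = (\<Sum>a\<in>actions G h0. d a) * reach G L \<pi> z"
    by (simp add: sum_distrib_right)
  then show ?thesis by (simp add: eq d)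
next
  case True
  then obtain i0 where i0: "i0 < length z" "take i0 z \<notin> chance G" "L (take i0 z) = l" by auto
  have uniq: "i = i0" if "i < length z" "take i z \<notin> chance G" "L (take i z) = l" for i
  proof (rule ccontr)
    assume "i \<noteq> i0"
    then have "i < i0 \<or> i0 < i" by arith
    moreover have "take i z \<in> p1_nodes G" "take i0 z \<in> p1_nodes G"
      using path_p1[OF wf z] that i0 by auto
    ultimately show False using na z that i0 unfolding NA_def by metis
  qed
  define R where "R = (\<Prod>i\<in>{..<length z} - {i0}. if take i z \<in> chance G then cprob G (take i z) (z ! i) else \<pi> (L (take i z)) (z ! i))"
  have eq: "reach G L (\<pi>(l := e)) z = e (z ! i0) * R" for e
  proof -
    have r: "reach G L (\<pi>(l := e)) z = (if take i0 z \<in> chance G then cprob G (take i0 z) (z ! i0) else (\<pi>(l := e)) (L (take i0 z)) (z ! i0))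
      * (\<Prod>i\<in>{..<length z} - {i0}. if take i z \<in> chance G then cprob G (take i z) (z ! i) else (\<pi>(l := e)) (L (take i z)) (z ! i))"
      unfolding reach_def by (rule prod.remove) (use i0 in auto)
    have y: "(\<Prod>i\<in>{..<length z} - {i0}. if take i z \<in> chance G then cprob G (take i z) (z ! i) else (\<pi>(l := e)) (L (take i z)) (z ! i)) = R"
      unfolding R_def by (rule prod.cong) (use uniq in auto)
    have x: "(if take i0 z \<in> chance G then cprob G (take i0 z) (z ! i0) else (\<pi>(l := e)) (L (take i0 z)) (z ! i0)) = e (z ! i0)"
      using i0 by simp
    show ?thesis by (simp only: r x y)
  qed
  have "z ! i0 \<in> actions G (take i0 z)" using path_action[OF wf z i0(1)] .
  moreover have "actions G (take i0 z) = actions G h0"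
    using ac h0 i0 path_p1[OF wf z i0(1) i0(2)] unfolding AC_def by metis
  ultimately have act: "z ! i0 \<in> actions G h0" by simp
  have "(\<Sum>a\<in>actions G h0. d a * reach G L (\<pi>(l := (\<lambda>b. if b = a then 1 else 0))) z)
      = (\<Sum>a\<in>actions G h0. if z ! i0 = a then d a * R else 0)"
    by (rule sum.cong) (auto simp: eq)
  also have "\<dots> = d (z ! i0) * R" using act finite_actions[OF wf] by simp
  finally show ?thesis by (simp add: eq)
qed

lemma EU_upd_lin:
  assumes wf: "wf_game G" and na: "NA G L" and ac: "AC G L"
    and h0: "h0 \<in> p1_nodes G" "L h0 = l" and d: "(\<Sum>a\<in>actions G h0. d a) = 1"
  shows "exp_util G L (\<pi>(l := d)) u = (\<Sum>a\<in>actions G h0. d a * exp_util G L (\<pi>(l := (\<lambda>b. if b = a then 1 else 0))) u)"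
proof -
  have "exp_util G L (\<pi>(l := d)) u = (\<Sum>z\<in>leaves G. \<Sum>a\<in>actions G h0. d a * (reach G L (\<pi>(l := (\<lambda>b. if b = a then 1 else 0))) z * u z))"
    unfolding exp_util_def
    by (rule sum.cong) (simp_all add: reach_upd_lin[OF wf na ac _ h0 d] leaves_def sum_distrib_right mult.assoc)
  also have "\<dots> = (\<Sum>a\<in>actions G h0. \<Sum>z\<in>leaves G. d a * (reach G L (\<pi>(l := (\<lambda>b. if b = a then 1 else 0))) z * u z))"
    by (rule sum.swap)
  also have "\<dots> = (\<Sum>a\<in>actions G h0. d a * exp_util G L (\<pi>(l := (\<lambda>b. if b = a then 1 else 0))) u)"
    unfolding exp_util_def by (simp add: sum_distrib_left)
  finally show ?thesis .
qed

lemma step: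
  assumes wf: "wf_game G" and na: "NA G L" and ac: "AC G L" and b: "behavioral G L \<pi>"
    and h0: "h0 \<in> p1_nodes G" "L h0 = l"
  shows "\<exists>a\<in>actions G h0. behavioral G L (\<pi>(l := (\<lambda>b. if b = a then 1 else 0)))
     \<and> exp_util G L \<pi> u \<le> exp_util G L (\<pi>(l := (\<lambda>b. if b = a then 1 else 0))) u"
proof -
  define A where "A = actions G h0"
  define f where "f = (\<lambda>a. exp_util G L (\<pi>(l := (\<lambda>b. if b = a then 1 else 0))) u)"
  have fin: "finite A" using finite_actions[OF wf] by (simp add: A_def)
  have ne: "A \<noteq> {}" using h0 by (simp add: A_def p1_nodes_def)
  have "Max (f ` A) \<in> f ` A" using fin ne by simp
  then obtain a0 where a0: "a0 \<in> A" "f a0 = Max (f ` A)" by auto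
  have amax: "f a \<le> f a0" if "a \<in> A" for a using a0 fin that by simp
  have dist: "(\<Sum>a\<in>A. \<pi> l a) = 1" and nn: "\<forall>a\<in>A. \<pi> l a \<ge> 0"
    using b h0 unfolding behavioral_def A_def by auto
  have "exp_util G L \<pi> u = exp_util G L (\<pi>(l := \<pi> l)) u" by simp
  also have "\<dots> = (\<Sum>a\<in>A. \<pi> l a * f a)"
    unfolding f_def A_def by (rule EU_upd_lin[OF wf na ac h0]) (use dist A_def in simp)
  also have "\<dots> \<le> (\<Sum>a\<in>A. \<pi> l a * f a0)"
    by (rule sum_mono) (use nn amax in \<open>auto intro: mult_left_mono\<close>)
  also have "\<dots> = f a0" using dist by (simp add: sum_distrib_right[symmetric])
  finally have le: "exp_util G L \<pi> u \<le> f a0" .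
  have beh: "behavioral G L (\<pi>(l := (\<lambda>b. if b = a0 then 1 else 0)))"
    unfolding behavioral_def
  proof (rule ballI, rule conjI)
    fix h assume h: "h \<in> p1_nodes G"
    show "\<forall>a\<in>actions G h. 0 \<le> (\<pi>(l := (\<lambda>b. if b = a0 then 1 else 0))) (L h) a"
      using b h unfolding behavioral_def by auto
    show "(\<Sum>a\<in>actions G h. (\<pi>(l := (\<lambda>b. if b = a0 then 1 else 0))) (L h) a) = 1"
    proof (cases "L h = l")
      case True
      then have "actions G h = A" using ac h h0 unfolding AC_def A_def by metis
      then show ?thesis using True a0 fin by simp
    next
      case False
      then show ?thesis using b h unfolding behavioral_def by auto
    qed
  qed
  show ?thesis using beh le a0 unfolding f_def A_def by blast
qed

lemma pure_exists:
  assumes wf: "wf_game G" and na: "NA G L" and ac: "AC G L" and b: "behavioral G L \<pi>"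
  shows "\<exists>s. behavioral G L (pure s) \<and> exp_util G L \<pi> u \<le> exp_util G L (pure s) u"
proof -
  define Lam where "Lam = L ` p1_nodes G"
  have main: "\<forall>\<pi>. behavioral G L \<pi> \<and> (\<forall>l\<in>Lam - F. \<exists>a. \<pi> l = (\<lambda>b. if b = a then 1 else 0)) \<longrightarrow>
     (\<exists>\<pi>'. behavioral G L \<pi>' \<and> (\<forall>l\<in>Lam. \<exists>a. \<pi>' l = (\<lambda>b. if b = a then 1 else 0)) \<and> exp_util G L \<pi> u \<le> exp_util G L \<pi>' u)"
    if "finite F" for F
    using that
  proof (induction F rule: finite_induct)
    case empty
    show ?case
    proof (intro allI impI)
      fix \<pi> assume p: "behavioral G L \<pi> \<and> (\<forall>l\<in>Lam - {}. \<exists>a. \<pi> l = (\<lambda>b. if b = a then 1 else 0))"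
      show "\<exists>\<pi>'. behavioral G L \<pi>' \<and> (\<forall>l\<in>Lam. \<exists>a. \<pi>' l = (\<lambda>b. if b = a then 1 else 0)) \<and> exp_util G L \<pi> u \<le> exp_util G L \<pi>' u"
        by (rule exI[of _ \<pi>]) (use p in simp)
    qed
  next
    case (insert l F)
    show ?case
    proof (intro allI impI)
      fix \<pi> assume p: "behavioral G L \<pi> \<and> (\<forall>l'\<in>Lam - insert l F. \<exists>a. \<pi> l' = (\<lambda>b. if b = a then 1 else 0))"
      show "\<exists>\<pi>'. behavioral G L \<pi>' \<and> (\<forall>l\<in>Lam. \<exists>a. \<pi>' l = (\<lambda>b. if b = a then 1 else 0)) \<and> exp_util G L \<pi> u \<le> exp_util G L \<pi>' u"
      proof (cases "l \<in> Lam")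
        case True
        then obtain h0 where h0: "h0 \<in> p1_nodes G" "L h0 = l" by (auto simp: Lam_def)
        have bp: "behavioral G L \<pi>" using p by (rule conjunct1)
        obtain a where a: "behavioral G L (\<pi>(l := (\<lambda>b. if b = a then 1 else 0)))"
          "exp_util G L \<pi> u \<le> exp_util G L (\<pi>(l := (\<lambda>b. if b = a then 1 else 0))) u"
          using step[OF wf na ac bp h0, of u] by blast
        have pure_l: "\<forall>l'\<in>Lam - F. \<exists>a'. (\<pi>(l := (\<lambda>b. if b = a then 1 else 0))) l' = (\<lambda>b. if b = a' then 1 else 0)"
        proof
          fix l' assume l': "l' \<in> Lam - F"
          show "\<exists>a'. (\<pi>(l := (\<lambda>b. if b = a then 1 else 0))) l' = (\<lambda>b. if b = a' then 1 else 0)"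
          proof (cases "l' = l")
            case True
            then show ?thesis by (intro exI[of _ a]) simp
          next
            case False
            then have "l' \<in> Lam - insert l F" using l' by simp
            then obtain a' where "\<pi> l' = (\<lambda>b. if b = a' then 1 else 0)" using p by blast
            then show ?thesis using False by (intro exI[of _ a']) simp
          qed
        qed
        have ex: "\<exists>\<pi>'. behavioral G L \<pi>' \<and> (\<forall>l\<in>Lam. \<exists>a. \<pi>' l = (\<lambda>b. if b = a then 1 else 0)) \<and>
            exp_util G L (\<pi>(l := (\<lambda>b. if b = a then 1 else 0))) u \<le> exp_util G L \<pi>' u"
          by (rule insert.IH[rule_format]) (rule conjI[OF a(1) pure_l])
        then obtain \<pi>' where pi': "behavioral G L \<pi>'" "(\<forall>l\<in>Lam. \<exists>a. \<pi>' l = (\<lambda>b. if b = a then 1 else 0))"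
          "exp_util G L (\<pi>(l := (\<lambda>b. if b = a then 1 else 0))) u \<le> exp_util G L \<pi>' u"
          by blast
        have "exp_util G L \<pi> u \<le> exp_util G L \<pi>' u" using a(2) pi'(3) by linarith
        then show ?thesis using pi'(1,2) by blast
      next
        case False
        then have eq: "Lam - F = Lam - insert l F" by auto
        have q: "behavioral G L \<pi> \<and> (\<forall>l'\<in>Lam - F. \<exists>a. \<pi> l' = (\<lambda>b. if b = a then 1 else 0))"
          using p unfolding eq .
        show ?thesis by (rule insert.IH[rule_format, OF q])
      qed
    qed
  qed
  have fin: "finite Lam" unfolding Lam_def using wf_finite[OF wf]
    by (intro finite_imageI) (auto simp: p1_nodes_def intro: finite_subset)
  have q0: "behavioral G L \<pi> \<and> (\<forall>l\<in>Lam - Lam. \<exists>a. \<pi> l = (\<lambda>b. if b = a then 1 else 0))"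
    using b by simp
  have "\<exists>\<pi>'. behavioral G L \<pi>' \<and> (\<forall>l\<in>Lam. \<exists>a. \<pi>' l = (\<lambda>b. if b = a then 1 else 0)) \<and> exp_util G L \<pi> u \<le> exp_util G L \<pi>' u"
    by (rule main[OF fin, rule_format, OF q0])
  then obtain \<pi>' where p': "behavioral G L \<pi>'" "\<forall>l\<in>Lam. \<exists>a. \<pi>' l = (\<lambda>b. if b = a then 1 else 0)"
    "exp_util G L \<pi> u \<le> exp_util G L \<pi>' u"
    by blast
  define s where "s l = (SOME a. \<pi>' l = (\<lambda>b. if b = a then 1 else 0))" for l
  have ps: "pure s l = \<pi>' l" if "l \<in> Lam" for l
  proof -
    have "\<exists>a. \<pi>' l = (\<lambda>b. if b = a then 1 else 0)" using p'(2) that by blast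
    then have "\<pi>' l = (\<lambda>b. if b = (SOME a. \<pi>' l = (\<lambda>b. if b = a then 1 else 0)) then 1 else 0)"
      by (rule someI_ex)
    then have "\<pi>' l = (\<lambda>b. if b = s l then 1 else 0)" unfolding s_def .
    then show ?thesis by (auto simp: pure_def)
  qed
  have psh: "pure s (L h) = \<pi>' (L h)" if "h \<in> p1_nodes G" for h
    using ps that by (simp add: Lam_def)
  have beh: "behavioral G L (pure s)" using p'(1) psh unfolding behavioral_def by simp
  have "reach G L (pure s) z = reach G L \<pi>' z" if "z \<in> leaves G" for z
    unfolding reach_def
  proof (rule prod.cong)
    fix i assume "i \<in> {..<length z}"
    then show "(if take i z \<in> chance G then cprob G (take i z) (z ! i) else pure s (L (take i z)) (z ! i)) =
        (if take i z \<in> chance G then cprob G (take i z) (z ! i) else \<pi>' (L (take i z)) (z ! i))"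
      using psh path_p1[OF wf, of z i] that by (auto simp: leaves_def)
  qed simp
  then have "exp_util G L (pure s) u = exp_util G L \<pi>' u" unfolding exp_util_def by simp
  then show ?thesis using beh p'(3) by auto
qed


definition Zs :: "('a, 'i) game \<Rightarrow> ('i \<times> ('i \<times> 'a) list \<Rightarrow> 'a) \<Rightarrow> 'a list \<Rightarrow> 'a list set" where
  "Zs G s x = {z \<in> leaves G. \<exists>w. z = x @ w \<and> cons_from G (pr1_labels G) s z (length x)}"

definition cov :: "('a, 'i) game \<Rightarrow> ('i \<times> ('i \<times> 'a) list \<Rightarrow> 'a) \<Rightarrow> 'a list \<Rightarrow> nat \<Rightarrow> bool" where
  "cov G s x N \<longleftrightarrow> (\<exists>T. finite T \<and> card T \<le> N \<and> (\<forall>z\<in>Zs G s x. \<exists>t\<in>T. cons_from G (info G) t z (length x)))"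

definition Km :: "('a, 'i) game \<Rightarrow> nat \<Rightarrow> 'a list \<Rightarrow> nat" where
  "Km G m x = (if subtree_chance G x = {} then 1 else Max (beta_fuel m G ` subtree_chance G x))"

lemma sub_finite: "wf_game G \<Longrightarrow> finite (subtree_chance G x)"
  unfolding subtree_chance_def wf_game_def by (auto intro: finite_subset)

lemma beta_ge1: "wf_game G \<Longrightarrow> c \<in> chance G \<Longrightarrow> 1 \<le> beta_fuel m G c"
proof (induction m arbitrary: c)
  case 0 then show ?case by simp
next
  case (Suc m)
  have ne: "actions G c \<noteq> {}" using Suc.prems unfolding wf_game_def by auto
  have fin: "finite (actions G c)" using finite_actions[OF Suc.prems(1)] .
  have t: "1 \<le> (if subtree_chance G (c @ [a]) = {} then 1 else Max (beta_fuel m G ` subtree_chance G (c @ [a])))" for a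
  proof (cases "subtree_chance G (c @ [a]) = {}")
    case False
    then obtain c' where c': "c' \<in> subtree_chance G (c @ [a])" by auto
    then have "c' \<in> chance G" by (simp add: subtree_chance_def)
    then have "1 \<le> beta_fuel m G c'" using Suc by blast
    also have "\<dots> \<le> Max (beta_fuel m G ` subtree_chance G (c @ [a]))"
      using c' sub_finite[OF Suc.prems(1)] by simp
    finally show ?thesis using False by simp
  qed simp
  have "1 \<le> card (actions G c)" using ne fin by (simp add: Suc_leI card_gt_0_iff)
  also have "\<dots> = (\<Sum>a\<in>actions G c. (1::nat))" by simp
  also have "\<dots> \<le> beta_fuel (Suc m) G c" by (simp only: beta_fuel.simps) (rule sum_mono, rule t)
  finally show ?case .
qed

lemma Km_ge1: "wf_game G \<Longrightarrow> 1 \<le> Km G m x"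
proof (cases "subtree_chance G x = {}")
  case False
  assume wf: "wf_game G"
  then obtain c where c: "c \<in> subtree_chance G x" using False by auto
  then have "1 \<le> beta_fuel m G c" using beta_ge1[OF wf] by (simp add: subtree_chance_def)
  also have "\<dots> \<le> Max (beta_fuel m G ` subtree_chance G x)" using c sub_finite[OF wf] by simp
  finally show ?thesis using False by (simp add: Km_def)
qed (simp add: Km_def)

lemma sub_mono: "subtree_chance G (x @ [a]) \<subseteq> subtree_chance G x"
  unfolding subtree_chance_def by auto

lemma Km_mono: "wf_game G \<Longrightarrow> Km G m (x @ [a]) \<le> Km G m x"
proof (cases "subtree_chance G (x @ [a]) = {}")
  case True
  assume wf: "wf_game G"
  then show ?thesis using True Km_ge1[OF wf, of m x] by (simp add: Km_def)
next
  case False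
  assume wf: "wf_game G"
  then have "subtree_chance G x \<noteq> {}" using sub_mono[of G x a] False by auto
  then show ?thesis using False sub_mono[of G x a] sub_finite[OF wf, of x] unfolding Km_def
    by (simp add: Max_mono image_mono)
qed

lemma cov_mono: "cov G s x N \<Longrightarrow> N \<le> M \<Longrightarrow> cov G s x M"
  unfolding cov_def by (meson order_trans)

lemma R_step:
  assumes wf: "wf_game G" and noabs: "no_absentmindedness G" and x: "x \<in> nodes G"
    and H: "\<forall>c\<in>subtree_chance G x. cov G s c (beta_fuel m G c)"
    and IH: "\<forall>a. x @ [a] \<in> nodes G \<longrightarrow> cov G s (x @ [a]) (Km G m (x @ [a]))"
  shows "cov G s x (Km G m x)"
proof (cases "x \<in> leaves G")
  case True
  have "\<forall>z\<in>Zs G s x. cons_from G (info G) t z (length x)" for t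
  proof
    fix z assume "z \<in> Zs G s x"
    then obtain w where "z = x @ w" "z \<in> nodes G" by (auto simp: Zs_def leaves_def)
    then have "z = x" using leaf_ext[OF wf True] by simp
    then show "cons_from G (info G) t z (length x)" by (auto simp: cons_from_def)
  qed
  then have "finite {undefined} \<and> card {undefined} \<le> Km G m x \<and>
     (\<forall>z\<in>Zs G s x. \<exists>t\<in>{undefined}. cons_from G (info G) t z (length x))"
    using Km_ge1[OF wf, of m x] by simp
  then show ?thesis unfolding cov_def by blast
next
  case nl: False
  show ?thesis
  proof (cases "x \<in> chance G")
    case True
    then have xs: "x \<in> subtree_chance G x" by (simp add: subtree_chance_def)
    then have ne: "subtree_chance G x \<noteq> {}" by blast
    have "beta_fuel m G x \<le> Max (beta_fuel m G ` subtree_chance G x)"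
      using sub_finite[OF wf, of x] xs by simp
    then have le: "beta_fuel m G x \<le> Km G m x" using ne by (simp add: Km_def)
    have c1: "cov G s x (beta_fuel m G x)" using H xs by blast
    show ?thesis by (rule cov_mono[OF c1 le])
  next
    case nc: False
    have xp1: "x \<in> p1_nodes G" using x nl nc by (simp add: p1_nodes_def leaves_def)
    show ?thesis
    proof (cases "Zs G s x = {}")
      case True
      then show ?thesis unfolding cov_def by (intro exI[of _ "{}"]) auto
    next
      case False
      define a where "a = s (pr1_labels G x)"
      have zprop: "length x < length z \<and> z ! length x = a \<and> z \<in> Zs G s (x @ [a])" if z: "z \<in> Zs G s x" for z
      proof -
        obtain w where w: "z = x @ w" "z \<in> leaves G" "cons_from G (pr1_labels G) s z (length x)"
          using z by (auto simp: Zs_def)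
        have "w \<noteq> []" using w nl by auto
        then obtain b w' where bw: "w = b # w'" by (cases w) auto
        have lt: "length x < length z" using w bw by simp
        have tx: "take (length x) z = x" using w(1) by simp
        have "\<forall>j. length x \<le> j \<and> j < length z \<and> take j z \<notin> chance G \<longrightarrow> s (pr1_labels G (take j z)) = z ! j"
          using w(3) unfolding cons_from_def .
        moreover have "length x \<le> length x \<and> length x < length z \<and> take (length x) z \<notin> chance G"
          using lt nc tx by simp
        ultimately have "s (pr1_labels G (take (length x) z)) = z ! length x" by blast
        then have za: "z ! length x = a" using w(1) by (simp add: a_def)
        then have "b = a" using w(1) bw by simp
        then have "z = (x @ [a]) @ w'" using w(1) bw by simp
        moreover have "cons_from G (pr1_labels G) s z (length (x @ [a]))"
          using w(3) unfolding cons_from_def by auto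
        ultimately have "z \<in> Zs G s (x @ [a])" using w(2) by (auto simp: Zs_def)
        then show ?thesis using lt za by simp
      qed
      obtain z0 where z0: "z0 \<in> Zs G s x" using False by auto
      have z0p: "length x < length z0" "z0 ! length x = a" using zprop[OF z0] by auto
      have "take (length x) z0 = x" using z0 by (auto simp: Zs_def)
      then have "take (Suc (length x)) z0 = x @ [a]"
        using z0p by (simp add: take_Suc_conv_app_nth)
      moreover have z0n: "z0 \<in> nodes G" using z0 by (simp add: Zs_def leaves_def)
      ultimately have xa: "x @ [a] \<in> nodes G"
        using take_node[OF wf z0n, of "Suc (length x)"] by simp
      obtain T' where T': "finite T'" "card T' \<le> Km G m (x @ [a])"
        "\<forall>z\<in>Zs G s (x @ [a]). \<exists>t\<in>T'. cons_from G (info G) t z (length (x @ [a]))"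
        using IH xa unfolding cov_def by blast
      define T where "T = (\<lambda>t. t(info G x := a)) ` T'"
      have "card T \<le> card T'" unfolding T_def by (rule card_image_le[OF T'(1)])
      also have "\<dots> \<le> Km G m x" using T'(2) Km_mono[OF wf, of m x a] by simp
      finally have cT: "card T \<le> Km G m x" .
      have cover: "\<exists>t\<in>T. cons_from G (info G) t z (length x)" if z: "z \<in> Zs G s x" for z
      proof -
        have pz: "length x < length z" "z ! length x = a" "z \<in> Zs G s (x @ [a])" using zprop[OF z] by auto
        obtain t where t: "t \<in> T'" "cons_from G (info G) t z (Suc (length x))"
          using T'(3) pz(3) by auto
        have zn: "z \<in> nodes G" and zx: "take (length x) z = x"
          using z by (auto simp: Zs_def leaves_def)
        have "cons_from G (info G) (t(info G x := a)) z (length x)"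
          unfolding cons_from_def
        proof (intro allI impI)
          fix j assume j: "length x \<le> j \<and> j < length z \<and> take j z \<notin> chance G"
          show "(t(info G x := a)) (info G (take j z)) = z ! j"
          proof (cases "j = length x")
            case True then show ?thesis using zx pz by simp
          next
            case False
            then have "length x < j" using j by simp
            moreover have "take j z \<in> p1_nodes G" using path_p1[OF wf zn] j by blast
            ultimately have c4: "length x < j \<and> j < length z \<and> take (length x) z \<in> p1_nodes G \<and> take j z \<in> p1_nodes G"
              using j xp1 zx by simp
            have "\<forall>i j. i < j \<and> j < length z \<and> take i z \<in> p1_nodes G \<and> take j z \<in> p1_nodes G
                \<longrightarrow> info G (take i z) \<noteq> info G (take j z)"
              using noabs zn unfolding no_absentmindedness_def by blast
            then have "info G (take (length x) z) \<noteq> info G (take j z)"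
              using c4 by blast
            then have "info G x \<noteq> info G (take j z)" using zx by simp
            then show ?thesis using t(2) j False unfolding cons_from_def by auto
          qed
        qed
        then show ?thesis using t(1) unfolding T_def by blast
      qed
      have finT: "finite T" unfolding T_def using T'(1) by simp
      show ?thesis unfolding cov_def
        using finT cT cover by blast
    qed
  qed
qed

lemma R_lemma:
  assumes wf: "wf_game G" and noabs: "no_absentmindedness G"
  shows "\<forall>x\<in>nodes G. (\<forall>w. x @ w \<in> nodes G \<longrightarrow> length w \<le> k) \<longrightarrow>
     (\<forall>c\<in>subtree_chance G x. cov G s c (beta_fuel m G c)) \<longrightarrow> cov G s x (Km G m x)"
proof (induction k)
  case 0
  show ?case
  proof (intro ballI impI)
    fix x assume x: "x \<in> nodes G" and h: "\<forall>w. x @ w \<in> nodes G \<longrightarrow> length w \<le> 0"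
      and H: "\<forall>c\<in>subtree_chance G x. cov G s c (beta_fuel m G c)"
    have "\<forall>a. x @ [a] \<in> nodes G \<longrightarrow> cov G s (x @ [a]) (Km G m (x @ [a]))"
    proof (intro allI impI)
      fix a assume "x @ [a] \<in> nodes G"
      then have "length [a] \<le> 0" using h by blast
      then show "cov G s (x @ [a]) (Km G m (x @ [a]))" by simp
    qed
    then show "cov G s x (Km G m x)" using R_step[OF wf noabs x H] by blast
  qed
next
  case (Suc k)
  show ?case
  proof (intro ballI impI)
    fix x assume x: "x \<in> nodes G" and h: "\<forall>w. x @ w \<in> nodes G \<longrightarrow> length w \<le> Suc k"
      and H: "\<forall>c\<in>subtree_chance G x. cov G s c (beta_fuel m G c)"
    have "cov G s (x @ [a]) (Km G m (x @ [a]))" if xa: "x @ [a] \<in> nodes G" for a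
    proof -
      have hh: "\<forall>w. (x @ [a]) @ w \<in> nodes G \<longrightarrow> length w \<le> k"
      proof (intro allI impI)
        fix w assume "(x @ [a]) @ w \<in> nodes G"
        then have "x @ (a # w) \<in> nodes G" by simp
        then have "length (a # w) \<le> Suc k" using h by blast
        then show "length w \<le> k" by simp
      qed
      have H': "\<forall>c\<in>subtree_chance G (x @ [a]). cov G s c (beta_fuel m G c)"
        using H sub_mono[of G x a] by blast
      show ?thesis by (rule mp[OF mp[OF bspec[OF Suc.IH xa] hh] H'])
    qed
    then show "cov G s x (Km G m x)" using R_step[OF wf noabs x H] by blast
  qed
qed

lemma O_lemma:
  assumes wf: "wf_game G" and noabs: "no_absentmindedness G"
  shows "\<forall>x\<in>chance G. (\<forall>w. x @ w \<in> nodes G \<longrightarrow> length w \<le> n) \<longrightarrow> cov G s x (beta_fuel n G x)"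
proof (induction n)
  case 0
  show ?case
  proof (intro ballI impI)
    fix x assume x: "x \<in> chance G" and h: "\<forall>w. x @ w \<in> nodes G \<longrightarrow> length w \<le> 0"
    have "actions G x \<noteq> {}" using x wf unfolding wf_game_def by auto
    then obtain a where "a \<in> actions G x" by blast
    then have "x @ [a] \<in> nodes G" by (simp add: actions_def)
    then show "cov G s x (beta_fuel 0 G x)" using h by fastforce
  qed
next
  case (Suc m)
  show ?case
  proof (intro ballI impI)
    fix x assume x: "x \<in> chance G" and h: "\<forall>w. x @ w \<in> nodes G \<longrightarrow> length w \<le> Suc m"
    define A where "A = actions G x"
    have finA: "finite A" using finite_actions[OF wf] by (simp add: A_def)
    have xn: "x \<in> nodes G" using x wf unfolding wf_game_def by auto
    have each: "cov G s (x @ [a]) (Km G m (x @ [a]))" if a: "a \<in> A" for a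
    proof -
      have xa: "x @ [a] \<in> nodes G" using a by (simp add: A_def actions_def)
      have hh: "\<forall>w. (x @ [a]) @ w \<in> nodes G \<longrightarrow> length w \<le> m"
      proof (intro allI impI)
        fix w assume "(x @ [a]) @ w \<in> nodes G"
        then have "x @ (a # w) \<in> nodes G" by simp
        then have "length (a # w) \<le> Suc m" using h by blast
        then show "length w \<le> m" by simp
      qed
      have H: "\<forall>c\<in>subtree_chance G (x @ [a]). cov G s c (beta_fuel m G c)"
      proof
        fix c assume c: "c \<in> subtree_chance G (x @ [a])"
        then obtain w' where cw: "c = x @ [a] @ w'" "c \<in> chance G" by (auto simp: subtree_chance_def)
        have "\<forall>v. c @ v \<in> nodes G \<longrightarrow> length v \<le> m"
        proof (intro allI impI)
          fix v assume "c @ v \<in> nodes G"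
          then have "x @ (a # w' @ v) \<in> nodes G" using cw by simp
          then have "length (a # w' @ v) \<le> Suc m" using h by blast
          then show "length v \<le> m" by simp
        qed
        then show "cov G s c (beta_fuel m G c)" by (rule mp[OF bspec[OF Suc.IH cw(2)]])
      qed
      show ?thesis by (rule mp[OF mp[OF bspec[OF R_lemma[OF wf noabs, of m s m] xa] hh] H])
    qed
    then have "\<forall>a\<in>A. \<exists>T. finite T \<and> card T \<le> Km G m (x @ [a]) \<and>
        (\<forall>z\<in>Zs G s (x @ [a]). \<exists>t\<in>T. cons_from G (info G) t z (length (x @ [a])))"
      unfolding cov_def by blast
    then obtain Tf where Tf: "\<forall>a\<in>A. finite (Tf a) \<and> card (Tf a) \<le> Km G m (x @ [a]) \<and>
        (\<forall>z\<in>Zs G s (x @ [a]). \<exists>t\<in>Tf a. cons_from G (info G) t z (length (x @ [a])))"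
      by metis
    define T where "T = (\<Union>a\<in>A. Tf a)"
    have finT: "finite T" using finA Tf by (simp add: T_def)
    have "card T \<le> (\<Sum>a\<in>A. card (Tf a))" unfolding T_def by (rule card_UN_le[OF finA])
    also have "\<dots> \<le> (\<Sum>a\<in>A. Km G m (x @ [a]))" by (rule sum_mono) (use Tf in blast)
    also have "\<dots> = beta_fuel (Suc m) G x" by (simp add: A_def Km_def)
    finally have cT: "card T \<le> beta_fuel (Suc m) G x" .
    have cover: "\<exists>t\<in>T. cons_from G (info G) t z (length x)" if z: "z \<in> Zs G s x" for z
    proof -
      obtain w where w: "z = x @ w" "z \<in> leaves G" "cons_from G (pr1_labels G) s z (length x)"
        using z by (auto simp: Zs_def)
      have "x \<notin> leaves G" using x wf unfolding wf_game_def leaves_def by auto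
      then have "w \<noteq> []" using w by auto
      then obtain b w' where bw: "w = b # w'" by (cases w) auto
      have zn: "z \<in> nodes G" using w by (simp add: leaves_def)
      have lt: "length x < length z" using w bw by simp
      have "z ! length x \<in> actions G (take (length x) z)" by (rule path_action[OF wf zn lt])
      moreover have zb: "z ! length x = b" using w bw by simp
      ultimately have bA: "b \<in> A" using w by (simp add: A_def)
      have "z = (x @ [b]) @ w'" using w bw by simp
      moreover have "cons_from G (pr1_labels G) s z (length (x @ [b]))"
        using w(3) unfolding cons_from_def by auto
      ultimately have "z \<in> Zs G s (x @ [b])" using w(2) by (auto simp: Zs_def)
      then obtain t where t: "t \<in> Tf b" "cons_from G (info G) t z (Suc (length x))"
        using Tf bA by auto
      have "cons_from G (info G) t z (length x)"
        unfolding cons_from_def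
      proof (intro allI impI)
        fix j assume j: "length x \<le> j \<and> j < length z \<and> take j z \<notin> chance G"
        then have "j \<noteq> length x" using x w by auto
        then show "t (info G (take j z)) = z ! j" using t(2) j unfolding cons_from_def by auto
      qed
      then show ?thesis using t bA unfolding T_def by blast
    qed
    show "cov G s x (beta_fuel (Suc m) G x)" unfolding cov_def
      using finT cT cover by blast
  qed
qed

lemma height: "wf_game G \<Longrightarrow> x @ w \<in> nodes G \<Longrightarrow> length w \<le> card (nodes G)"
proof -
  assume wf: "wf_game G" and n: "x @ w \<in> nodes G"
  define z where "z = x @ w"
  have zn: "z \<in> nodes G" using n z_def by simp
  have "(\<lambda>i. take i z) ` {..length z} \<subseteq> nodes G" using take_node[OF wf zn] by blast
  moreover have inj: "inj_on (\<lambda>i. take i z) {..length z}"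
    by (rule inj_onI) (metis atMost_iff length_take min.absorb2)
  ultimately have "card ((\<lambda>i. take i z) ` {..length z}) \<le> card (nodes G)"
    using wf_finite[OF wf] by (auto intro: card_mono)
  moreover have "card ((\<lambda>i. take i z) ` {..length z}) = card {..length z}"
    by (rule card_image[OF inj])
  ultimately have "card {..length z} \<le> card (nodes G)" by simp
  then show ?thesis unfolding z_def by simp
qed

lemma cover_root:
  assumes wf: "wf_game G" and noabs: "no_absentmindedness G"
  shows "cov G s [] (beta_max G)"
proof -
  have root: "[] \<in> nodes G" using wf by (simp add: wf_game_def)
  have sc: "subtree_chance G [] = chance G" by (auto simp: subtree_chance_def)
  have H: "\<forall>c\<in>subtree_chance G []. cov G s c (beta_fuel (card (nodes G)) G c)"
  proof
    fix c assume "c \<in> subtree_chance G []"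
    then have c: "c \<in> chance G" using sc by simp
    have "\<forall>w. c @ w \<in> nodes G \<longrightarrow> length w \<le> card (nodes G)" using height[OF wf] by blast
    then show "cov G s c (beta_fuel (card (nodes G)) G c)"
      by (rule mp[OF bspec[OF O_lemma[OF wf noabs, of "card (nodes G)" s] c]])
  qed
  have hr: "\<forall>w. [] @ w \<in> nodes G \<longrightarrow> length w \<le> card (nodes G)" using height[OF wf] by blast
  have "cov G s [] (Km G (card (nodes G)) [])"
    by (rule mp[OF mp[OF bspec[OF R_lemma[OF wf noabs, of "card (nodes G)" s "card (nodes G)"] root] hr] H])
  moreover have "Km G (card (nodes G)) [] = beta_max G"
    unfolding Km_def beta_max_def sc beta_def by simp
  ultimately show ?thesis by simp
qed


lemma na_pr1:
  assumes noabs: "no_absentmindedness G"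
  shows "NA G (pr1_labels G)"
  unfolding NA_def
proof (intro ballI allI impI)
  fix z i j assume z: "z \<in> nodes G"
    and c: "i < j \<and> j < length z \<and> take i z \<in> p1_nodes G \<and> take j z \<in> p1_nodes G"
  have "\<forall>i j. i < j \<and> j < length z \<and> take i z \<in> p1_nodes G \<and> take j z \<in> p1_nodes G \<longrightarrow>
        info G (take i z) \<noteq> info G (take j z)"
    using noabs z unfolding no_absentmindedness_def by blast
  then have "info G (take i z) \<noteq> info G (take j z)" using c by blast
  then show "pr1_labels G (take i z) \<noteq> pr1_labels G (take j z)" by (simp add: pr1_labels_def)
qed

lemma ac_info: "wf_game G \<Longrightarrow> AC G (info G)"
  unfolding AC_def wf_game_def by blast

lemma ac_pr1:
  assumes wf: "wf_game G"
  shows "AC G (pr1_labels G)"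
  unfolding AC_def
proof (intro ballI impI)
  fix h h' assume h: "h \<in> p1_nodes G" "h' \<in> p1_nodes G" and e: "pr1_labels G h = pr1_labels G h'"
  then have "info G h = info G h'" by (simp add: pr1_labels_def)
  then show "actions G h = actions G h'" using ac_info[OF wf] h unfolding AC_def by blast
qed

lemma main_bound:
  assumes wf: "wf_game G" and noabs: "no_absentmindedness G"
    and u: "\<forall>z\<in>leaves G. u z \<ge> 0" and b: "behavioral G (pr1_labels G) \<pi>"
  shows "exp_util G (pr1_labels G) \<pi> u \<le> real (beta_max G) * opt_val G (info G) u"
proof -
  have na: "NA G (pr1_labels G)" by (rule na_pr1[OF noabs])
  have ac: "AC G (pr1_labels G)" by (rule ac_pr1[OF wf])
  have aci: "AC G (info G)" by (rule ac_info[OF wf])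
  obtain s where s: "behavioral G (pr1_labels G) (pure s)"
    "exp_util G (pr1_labels G) \<pi> u \<le> exp_util G (pr1_labels G) (pure s) u"
    using pure_exists[OF wf na ac b] by blast
  obtain T where T: "finite T" "card T \<le> beta_max G"
    "\<forall>z\<in>Zs G s []. \<exists>t\<in>T. cons_from G (info G) t z 0"
    using cover_root[OF wf noabs, of s] unfolding cov_def by auto
  have bt: "behavioral G (info G) (pure (fixv G (info G) t))" for t
    by (rule valid_behav[OF wf]) (use fixv_valid[OF aci] in blast)
  have opt_ge: "exp_util G (info G) (pure (fixv G (info G) t)) u \<le> opt_val G (info G) u" for t
    by (rule opt_upper[OF wf bt u])
  have opt0: "0 \<le> opt_val G (info G) u"
    using opt_ge[of undefined] EU_bounds[OF wf bt u, of undefined] by linarith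
  have lvn: "z \<in> leaves G \<Longrightarrow> z \<in> nodes G" for z by (simp add: leaves_def)
  have "exp_util G (pr1_labels G) (pure s) u
      = (\<Sum>z\<in>leaves G. (if cons_from G (pr1_labels G) s z 0 then cp G z else 0) * u z)"
    unfolding exp_util_def reach_pure ..
  also have "\<dots> \<le> (\<Sum>z\<in>leaves G. \<Sum>t\<in>T. (if cons_from G (info G) t z 0 then cp G z else 0) * u z)"
  proof (rule sum_mono)
    fix z assume z: "z \<in> leaves G"
    have nn: "\<forall>t\<in>T. 0 \<le> (if cons_from G (info G) t z 0 then cp G z else 0) * u z"
      using cp_nonneg[OF wf lvn[OF z]] u z by auto
    show "(if cons_from G (pr1_labels G) s z 0 then cp G z else 0) * u z
        \<le> (\<Sum>t\<in>T. (if cons_from G (info G) t z 0 then cp G z else 0) * u z)"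
    proof (cases "cons_from G (pr1_labels G) s z 0")
      case True
      then have "z \<in> Zs G s []" using z by (simp add: Zs_def)
      then obtain t where t: "t \<in> T" "cons_from G (info G) t z 0" using T(3) by blast
      have "(if cons_from G (pr1_labels G) s z 0 then cp G z else 0) * u z
          = (if cons_from G (info G) t z 0 then cp G z else 0) * u z" using True t by simp
      also have "\<dots> \<le> (\<Sum>t\<in>T. (if cons_from G (info G) t z 0 then cp G z else 0) * u z)"
        by (rule member_le_sum) (use t T(1) nn in auto)
      finally show ?thesis .
    next
      case False
      then show ?thesis using nn by (simp add: sum_nonneg)
    qed
  qed
  also have "\<dots> = (\<Sum>t\<in>T. \<Sum>z\<in>leaves G. (if cons_from G (info G) t z 0 then cp G z else 0) * u z)"
    by (rule sum.swap)
  also have "\<dots> \<le> (\<Sum>t\<in>T. opt_val G (info G) u)"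
  proof (rule sum_mono)
    fix t assume "t \<in> T"
    have "(\<Sum>z\<in>leaves G. (if cons_from G (info G) t z 0 then cp G z else 0) * u z)
        \<le> (\<Sum>z\<in>leaves G. (if cons_from G (info G) (fixv G (info G) t) z 0 then cp G z else 0) * u z)"
    proof (rule sum_mono)
      fix z assume z: "z \<in> leaves G"
      show "(if cons_from G (info G) t z 0 then cp G z else 0) * u z
          \<le> (if cons_from G (info G) (fixv G (info G) t) z 0 then cp G z else 0) * u z"
        using fixv_cons[OF wf aci lvn[OF z], of t 0] cp_nonneg[OF wf lvn[OF z]] u z by auto
    qed
    also have "\<dots> = exp_util G (info G) (pure (fixv G (info G) t)) u"
      unfolding exp_util_def reach_pure ..
    also have "\<dots> \<le> opt_val G (info G) u" by (rule opt_ge)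
    finally show "(\<Sum>z\<in>leaves G. (if cons_from G (info G) t z 0 then cp G z else 0) * u z) \<le> opt_val G (info G) u" .
  qed
  also have "\<dots> = real (card T) * opt_val G (info G) u" by simp
  also have "\<dots> \<le> real (beta_max G) * opt_val G (info G) u"
    using T(2) opt0 by (intro mult_right_mono) auto
  finally show ?thesis using s(2) by linarith
qed

theorem corollary4:
  fixes G :: "('a, 'i) game"
  assumes "wf_game G" and "no_absentmindedness G"
  shows "VoR_opt_class G \<le> real (beta_max G)"
proof -
  note wf = assms(1) and noabs = assms(2)
  have ac: "AC G (pr1_labels G)" by (rule ac_pr1[OF wf])
  have aci: "AC G (info G)" by (rule ac_info[OF wf])
  have bp: "behavioral G (pr1_labels G) (pure (fixv G (pr1_labels G) undefined))"
    by (rule valid_behav[OF wf]) (use fixv_valid[OF ac] in blast)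
  have bi: "behavioral G (info G) (pure (fixv G (info G) undefined))"
    by (rule valid_behav[OF wf]) (use fixv_valid[OF aci] in blast)
  have each: "VoR_opt G u \<le> real (beta_max G)" if u: "\<forall>z\<in>leaves G. u z \<ge> 0" for u
  proof -
    have le: "opt_val G (pr1_labels G) u \<le> real (beta_max G) * opt_val G (info G) u"
      by (rule opt_least[OF bp]) (rule main_bound[OF wf noabs u])
    have opt0: "0 \<le> opt_val G (info G) u"
      using opt_upper[OF wf bi u] EU_bounds[OF wf bi u] by linarith
    show ?thesis
    proof (cases "opt_val G (info G) u = 0")
      case True then show ?thesis by (simp add: VoR_opt_def)
    next
      case False
      then have "0 < opt_val G (info G) u" using opt0 by simp
      then show ?thesis using le by (simp add: VoR_opt_def pos_divide_le_eq)
    qed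
  qed
  show ?thesis unfolding VoR_opt_class_def
    by (rule cSUP_least) (use each in auto)
qed

end
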